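(* Let $1<p<\infty$, $p'=p/(p-1)$, and let $f\in L_p([-\pi,\pi])$ have Fourier series $\sum_{k\in\mathbb Z}a_ke^{ikx}$. Then $$\|a\|_{n_{p',p}}\lesssim\|f\|_{L_p([-\pi,\pi])},$$ with a constant depending only on $p$.
   Context: The Fourier coefficients are $a_k=\frac1{2\pi}\int_{-\pi}^{\pi}f(x)e^{-ikx}dx$. An interval in $\mathbb Z$ is a finite nonempty set of consecutive integers; $\mathcal W$ denotes the set of all intervals and $|w|$ the cardinality of $w$. For $k\in\mathbb N$, $\widetilde a_k=\sup_{w\in\mathcal W,\ |w|\ge k}\frac1{|w|}\big|\sum_{j\in w}a_j\big|$. For $1<r<\infty$, $1<q<\infty$ the net norm is $\|a\|_{n_{r,q}}=\big(\sum_{k=1}^\infty k^{q/r-1}\widetilde a_k^{\,q}\big)^{1/q}$; thus $\|a\|_{n_{p',p}}=\big(\sum_{k\ge1}k^{p-2}\widetilde a_k^{\,p}\big)^{1/p}$. *)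

theory Defs
  imports "HOL-Analysis.Analysis"
begin

definition fourier_coeff :: "(real \<Rightarrow> complex) \<Rightarrow> int \<Rightarrow> complex" where
  "fourier_coeff f k =
     complex_of_real (1 / (2 * pi)) *
       (LINT x:{-pi..pi}|lborel. f x * exp (- (\<i> * of_int k * of_real x)))"

definition int_intervals :: "int set set" where
  "int_intervals = {{m..n} | m n. m \<le> n}"

definition net_max :: "(int \<Rightarrow> complex) \<Rightarrow> nat \<Rightarrow> real" where
  "net_max a k = Sup {norm (\<Sum>j\<in>w. a j) / real (card w) | w. w \<in> int_intervals \<and> card w \<ge> k}"

definition net_term :: "real \<Rightarrow> real \<Rightarrow> (int \<Rightarrow> complex) \<Rightarrow> nat \<Rightarrow> real" where
  "net_term r q a k = real k powr (q / r - 1) * net_max a k powr q"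

definition net_norm :: "real \<Rightarrow> real \<Rightarrow> (int \<Rightarrow> complex) \<Rightarrow> real" where
  "net_norm r q a = (\<Sum>k. net_term r q a (Suc k)) powr (1 / q)"

definition Lp_norm_pi :: "real \<Rightarrow> (real \<Rightarrow> complex) \<Rightarrow> real" where
  "Lp_norm_pi p f = (LINT x:{-pi..pi}|lborel. norm (f x) powr p) powr (1 / p)"

end

theory Submission
  imports Defs
begin

lemma powr_mvt:
  fixes a b e :: real
  assumes "0 < a" "a < b"
  shows "\<exists>z. a < z \<and> z < b \<and> b powr e - a powr e = (b - a) * (e * z powr (e - 1))"
proof -
  have "((\<lambda>x. x powr e) has_real_derivative (e * x powr (e - 1))) (at x)" if "a \<le> x" "x \<le> b" for x
    using assms that by (auto intro!: derivative_eq_intros)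
  from MVT2[OF assms(2) this] show ?thesis by blast
qed

lemma powr_step_head:
  fixes s :: real assumes s: "0 < s" "s \<le> 1" and K: "1 \<le> K"
  shows "s * (K + 1) powr (s - 1) \<le> (K + 1) powr s - K powr s"
proof -
  obtain z where z: "K < z" "z < K + 1" "(K+1) powr s - K powr s = (K + 1 - K) * (s * z powr (s - 1))"
    using powr_mvt[of K "K+1" s] K by auto
  have "(K+1) powr (s - 1) \<le> z powr (s - 1)"
    using z K s by (intro powr_mono2') auto
  then show ?thesis using z s by (simp add: mult_left_mono)
qed

lemma powr_step_tail:
  fixes s :: real assumes s: "0 < s" "s < 1" and K: "1 \<le> K"
  shows "(1 - s) * (K + 1) powr (s - 2) \<le> K powr (s - 1) - (K + 1) powr (s - 1)"
proof -
  obtain z where z: "K < z" "z < K + 1" "(K+1) powr (s-1) - K powr (s-1) = (K + 1 - K) * ((s-1) * z powr (s - 1 - 1))"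
    using powr_mvt[of K "K+1" "s-1"] K by auto
  have "(K+1) powr (s - 2) \<le> z powr (s - 2)"
    using z K s by (intro powr_mono2') auto
  then have "(1-s) * (K+1) powr (s - 2) \<le> (1-s) * z powr (s - 2)" using s by (simp add: mult_left_mono)
  then show ?thesis using z s by (simp add: algebra_simps)
qed

lemma head_sum:
  fixes s :: real assumes s: "0 < s" "s \<le> 1"
  shows "(\<Sum>k=1..K. real k powr (s - 1)) \<le> real K powr s / s"
proof (induction K)
  case 0 then show ?case by simp
next
  case (Suc K)
  show ?case
  proof (cases "K = 0")
    case True then show ?thesis using s by simp
  next
    case False
    have "s * (real K + 1) powr (s - 1) \<le> (real K + 1) powr s - real K powr s"
      using powr_step_head[OF s, of "real K"] False by simp
    then have "(real K + 1) powr (s - 1) \<le> ((real K + 1) powr s - real K powr s) / s"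
      using s by (simp add: field_simps)
    then have "(1 + real K) powr (s - 1) \<le> (1 + real K) powr s / s - real K powr s / s"
      by (simp add: diff_divide_distrib add.commute)
    then show ?thesis using Suc.IH by simp
  qed
qed

lemma tail_sum:
  fixes s :: real assumes s: "0 < s" "s < 1" and L: "1 \<le> L"
  shows "(\<Sum>k=L+1..N. real k powr (s - 2)) \<le> real L powr (s - 1) / (1 - s)"
proof -
  have "(\<Sum>k=L+1..N. real k powr (s - 2)) \<le> (real L powr (s - 1) - real N powr (s - 1)) / (1 - s)" if "L \<le> N" for N
    using that
  proof (induction N rule: dec_induct)
    case base then show ?case by simp
  next
    case (step N)
    have "(1 - s) * (real N + 1) powr (s - 2) \<le> real N powr (s - 1) - (real N + 1) powr (s - 1)"
      using powr_step_tail[OF s, of "real N"] step L by simp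
    then have "(real N + 1) powr (s - 2) \<le> (real N powr (s - 1) - (real N + 1) powr (s - 1)) / (1 - s)"
      using s by (simp add: field_simps)
    moreover have "Suc N \<ge> L + 1" using step by simp
    ultimately have "(1 + real N) powr (s - 2) \<le> real N powr (s - 1) / (1 - s) - (1 + real N) powr (s - 1) / (1 - s)"
      by (simp add: diff_divide_distrib add.commute)
    then show ?case using step.IH step.hyps by (simp add: diff_divide_distrib)
  qed
  note A = this
  show ?thesis
  proof (cases "L \<le> N")
    case True
    have "0 \<le> real N powr (s - 1) / (1 - s)" using s by simp
    then show ?thesis using A[OF True] by (simp add: diff_divide_distrib)
  next
    case False
    then have "{L+1..N} = {}" by auto
    then show ?thesis using s by simp
  qed
qed

lemma ksum_bound:
  fixes s y :: real assumes s: "0 < s" "s < 1" and y: "0 < y"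
  shows "(\<Sum>k=1..N. real k powr (s - 1) * min 1 (1 / (real k * y))) \<le> (1/s + 1 + 3/(1-s)) * (1/y) powr s"
proof -
  define c where "c = 1 / y"
  have c: "c > 0" using y by (simp add: c_def)
  define K where "K = nat \<lfloor>c\<rfloor>"
  have Kc: "real K \<le> c" using c by (simp add: K_def)
  have cK: "c < real K + 1" using c by (simp add: K_def)
  define b where "b k = (if k \<le> K then real k powr (s - 1) else c * real k powr (s - 2))" for k :: nat
  have tb: "real k powr (s - 1) * min 1 (1 / (real k * y)) \<le> b k" if "k \<ge> 1" for k
  proof (cases "k \<le> K")
    case True
    then show ?thesis by (simp add: b_def mult_left_le)
  next
    case False
    then have "real k > c" using cK by linarith
    then have "1 < real k * y" using y by (simp add: c_def divide_less_eq)
    then have "1 / (real k * y) \<le> 1" by simp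
    then have "min 1 (1 / (real k * y)) = 1 / (real k * y)" by (rule min_absorb2)
    also have "\<dots> = c / real k" by (simp add: c_def)
    finally have "min 1 (1 / (real k * y)) = c / real k" .
    then have "real k powr (s - 1) * min 1 (1 / (real k * y)) = c * (real k powr (s - 1) / real k)" by simp
    also have "real k powr (s - 1) / real k = real k powr (s - 2)"
    proof -
      have "real k powr (s - 2) = real k powr ((s - 1) - 1)" by simp
      also have "\<dots> = real k powr (s - 1) / real k powr 1" by (rule powr_diff)
      finally show ?thesis using that by simp
    qed
    finally show ?thesis using False by (simp add: b_def)
  qed
  have bnn: "b k \<ge> 0" for k using c by (simp add: b_def)
  have "(\<Sum>k=1..N. real k powr (s - 1) * min 1 (1 / (real k * y))) \<le> (\<Sum>k=1..N. b k)"
    by (intro sum_mono tb) auto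
  also have "\<dots> \<le> (\<Sum>k\<in>{1..K} \<union> {K+1..N}. b k)"
    by (intro sum_mono2 bnn) auto
  also have "\<dots> = (\<Sum>k=1..K. b k) + (\<Sum>k=K+1..N. b k)"
    by (intro sum.union_disjoint) auto
  also have "(\<Sum>k=1..K. b k) = (\<Sum>k=1..K. real k powr (s - 1))"
    by (intro sum.cong) (auto simp: b_def)
  also have "\<dots> \<le> real K powr s / s" by (rule head_sum) (use s in auto)
  also have "\<dots> \<le> c powr s / s" using Kc s by (intro divide_right_mono powr_mono2) auto
  also have "(\<Sum>k=K+1..N. b k) = c * (\<Sum>k=K+1..N. real k powr (s - 2))"
    by (simp add: sum_distrib_left b_def)
  also have "\<dots> \<le> (1 + 3/(1-s)) * c powr s"
  proof (cases "K = 0")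
    case True
    then have c1: "c < 1" using cK by simp
    have "(\<Sum>k=K+1..N. real k powr (s - 2)) \<le> 1 + 1/(1-s)"
    proof (cases "N = 0")
      case True then show ?thesis using s by simp
    next
      case False
      have "{K+1..N} = insert 1 {1+1..N}" using True False by auto
      then have "(\<Sum>k=K+1..N. real k powr (s - 2)) = 1 + (\<Sum>k=1+1..N. real k powr (s - 2))" by simp
      also have "(\<Sum>k=1+1..N. real k powr (s - 2)) \<le> real 1 powr (s - 1) / (1 - s)"
        by (rule tail_sum) (use s in auto)
      finally show ?thesis by simp
    qed
    then have "c * (\<Sum>k=K+1..N. real k powr (s - 2)) \<le> c * (1 + 1/(1-s))"
      using c by (intro mult_left_mono) auto
    also have "c * (1 + 1/(1-s)) \<le> c powr s * (1 + 3/(1-s))"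
    proof -
      have "c powr 1 \<le> c powr s" using c c1 s by (intro powr_mono') auto
      then have "c \<le> c powr s" using c by simp
      moreover have "1 + 1/(1-s) \<le> 1 + 3/(1-s)" using s by (simp add: divide_right_mono)
      ultimately show ?thesis using s c by (intro mult_mono) auto
    qed
    finally show ?thesis by (simp add: mult.commute)
  next
    case False
    have t1: "(\<Sum>k=K+1..N. real k powr (s - 2)) \<le> real K powr (s - 1) / (1 - s)"
      by (rule tail_sum) (use s False in auto)
    have t2: "real K powr (s - 1) \<le> (c/2) powr (s - 1)"
      using False cK s c by (intro powr_mono2') auto
    have t3: "(c/2) powr (s - 1) = c powr (s-1) * 2 powr (1 - s)"
    proof -
      have "(c/2) powr (s - 1) = c powr (s-1) / 2 powr (s - 1)" using c by (simp add: powr_divide)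
      also have "2 powr (s - 1) = inverse (2 powr (1 - s))"
        using powr_minus[of 2 "1 - s"] by simp
      finally show ?thesis by (simp only: divide_inverse inverse_inverse_eq)
    qed
    have t4: "2 powr (1 - s) \<le> (2::real) powr 1" using s by (intro powr_mono) auto
    have "real K powr (s - 1) \<le> c powr (s-1) * 2"
    proof -
      have "c powr (s-1) * 2 powr (1 - s) \<le> c powr (s-1) * 2" using t4 by (intro mult_left_mono) auto
      then show ?thesis using t2 t3 by linarith
    qed
    then have "(\<Sum>k=K+1..N. real k powr (s - 2)) \<le> 2 * c powr (s-1) / (1 - s)"
    proof -
      have "real K powr (s - 1) / (1 - s) \<le> c powr (s-1) * 2 / (1 - s)"
        using \<open>real K powr (s - 1) \<le> c powr (s-1) * 2\<close> s by (intro divide_right_mono) auto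
      then show ?thesis using t1 by (simp add: mult.commute)
    qed
    then have "c * (\<Sum>k=K+1..N. real k powr (s - 2)) \<le> c * (2 * c powr (s-1) / (1 - s))"
      using c by (intro mult_left_mono) auto
    also have "c * (2 * c powr (s-1) / (1 - s)) = 2 * c powr s / (1-s)"
    proof -
      have "c * c powr (s-1) = c powr 1 * c powr (s - 1)" using c by simp
      also have "\<dots> = c powr (1 + (s - 1))" by (rule powr_add[symmetric])
      also have "\<dots> = c powr s" by simp
      finally show ?thesis by simp
    qed
    also have "\<dots> \<le> (1 + 3/(1-s)) * c powr s"
    proof -
      have "2/(1-s) \<le> 3/(1-s)" using s by (intro divide_right_mono) auto
      also have "\<dots> \<le> 1 + 3/(1-s)" by simp
      finally have "2/(1-s) * c powr s \<le> (1 + 3/(1-s)) * c powr s" by (intro mult_right_mono) auto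
      then show ?thesis by simp
    qed
    finally show ?thesis .
  qed
  finally show ?thesis by (simp add: c_def distrib_right)
qed

lemma sin_ge_quarter:
  fixes t :: real assumes t: "0 \<le> t" "t \<le> pi/2"
  shows "t / 4 \<le> sin t"
proof (cases "t \<le> pi/3")
  case True
  have "(\<lambda>u. sin u - u/2) 0 \<le> (\<lambda>u. sin u - u/2) t"
  proof (rule DERIV_nonneg_imp_nondecreasing[OF t(1)])
    fix u assume u: "0 \<le> u" "u \<le> t"
    have "cos (pi/3) \<le> cos u" using u True by (intro cos_monotone_0_pi_le) auto
    then have "cos u - 1/2 \<ge> 0" by (simp add: cos_60)
    moreover have "((\<lambda>u. sin u - u/2) has_real_derivative (cos u - 1/2)) (at u)"
      by (auto intro!: derivative_eq_intros)
    ultimately show "\<exists>y. ((\<lambda>u. sin u - u/2) has_real_derivative y) (at u) \<and> 0 \<le> y" by blast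
  qed
  then show ?thesis using t by simp
next
  case False
  have "sin (pi/3) \<le> sin t" using False t by (intro sin_monotone_2pi_le) auto
  moreover have "(1::real) \<le> sqrt 3" by simp
  moreover have "t / 4 \<le> 1/2" using t pi_less_4 by simp
  ultimately show ?thesis unfolding sin_60 by linarith
qed

lemma norm_one_minus_exp:
  fixes x :: real
  shows "norm (1 - exp (- (\<i> * of_real x))) = 2 * \<bar>sin (x/2)\<bar>"
proof -
  have "(norm (1 - exp (- (\<i> * of_real x))))\<^sup>2 = (1 - cos x)\<^sup>2 + (sin x)\<^sup>2"
    by (simp add: cmod_power2 Re_exp Im_exp)
  also have "\<dots> = 2 - 2 * cos x" by (simp add: power2_eq_square algebra_simps sin_squared_eq)
  also have "cos x = 1 - 2 * sin (x/2) ^ 2" using cos_double_sin[of "x/2"] by simp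
  finally have "(norm (1 - exp (- (\<i> * of_real x))))\<^sup>2 = (2 * \<bar>sin (x/2)\<bar>)\<^sup>2"
    by (simp add: power2_eq_square)
  then show ?thesis
    by (metis abs_norm_cancel power2_abs abs_mult abs_numeral real_sqrt_abs)
qed

lemma norm_one_minus_exp_ge:
  fixes x :: real assumes "\<bar>x\<bar> \<le> pi"
  shows "\<bar>x\<bar> / 4 \<le> norm (1 - exp (- (\<i> * of_real x)))"
proof -
  have "\<bar>x\<bar>/2 / 4 \<le> sin (\<bar>x\<bar>/2)" using assms by (intro sin_ge_quarter) auto
  moreover have "sin (\<bar>x\<bar>/2) = \<bar>sin (x/2)\<bar>"
  proof (cases "x \<ge> 0")
    case True
    then have "sin (x/2) \<ge> 0" using assms by (intro sin_ge_zero) auto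
    then show ?thesis using True by simp
  next
    case False
    then have "sin (-x/2) \<ge> 0" using assms by (intro sin_ge_zero) auto
    then show ?thesis using False by simp
  qed
  ultimately show ?thesis by (simp add: norm_one_minus_exp)
qed

lemma norm_exp_ix [simp]: "norm (exp (- (\<i> * of_int j * of_real x))) = 1"
  by (simp add: norm_exp_eq_Re)

lemma dirichlet_card_bound:
  fixes x :: real and m n :: int
  shows "norm (\<Sum>j\<in>{m..n}. exp (- (\<i> * of_int j * of_real x))) \<le> real (card {m..n})"
proof -
  have "norm (\<Sum>j\<in>{m..n}. exp (- (\<i> * of_int j * of_real x))) \<le> (\<Sum>j\<in>{m..n}. norm (exp (- (\<i> * of_int j * of_real x))))"
    by (rule norm_sum)
  also have "\<dots> = real (card {m..n})" by simp
  finally show ?thesis .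
qed

lemma dirichlet_x_bound:
  fixes x :: real and m n :: int
  assumes "x \<noteq> 0" "\<bar>x\<bar> \<le> pi"
  shows "norm (\<Sum>j\<in>{m..n}. exp (- (\<i> * of_int j * of_real x))) \<le> 8 / \<bar>x\<bar>"
proof -
  define N where "N = nat (n - m + 1)"
  define z where "z = exp (- (\<i> * of_real x))"
  define w where "w = exp (- (\<i> * of_int m * of_real x))"
  have zne: "norm (1 - z) \<ge> \<bar>x\<bar> / 4" unfolding z_def using assms by (intro norm_one_minus_exp_ge)
  then have z1: "z \<noteq> 1" using assms by auto
  have img: "{m..n} = (\<lambda>l. m + int l) ` {..<N}"
  proof (rule set_eqI, rule iffI)
    fix j assume "j \<in> {m..n}"
    then have "j = m + int (nat (j - m))" "nat (j - m) < N" by (auto simp: N_def)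
    then show "j \<in> (\<lambda>l. m + int l) ` {..<N}" by blast
  qed (auto simp: N_def)
  have inj: "inj_on (\<lambda>l. m + int l) {..<N}" by (auto simp: inj_on_def)
  have "(\<Sum>j\<in>{m..n}. exp (- (\<i> * of_int j * of_real x))) = (\<Sum>l<N. exp (- (\<i> * of_int (m + int l) * of_real x)))"
    unfolding img by (subst sum.reindex[OF inj]) simp
  also have "\<dots> = (\<Sum>l<N. w * z ^ l)"
  proof (rule sum.cong[OF refl])
    fix l
    have "- (\<i> * of_int (m + int l) * of_real x) = - (\<i> * of_int m * of_real x) + of_nat l * (- (\<i> * of_real x))"
      by (simp add: algebra_simps)
    then show "exp (- (\<i> * of_int (m + int l) * of_real x)) = w * z ^ l"
      by (simp only: w_def z_def exp_add exp_of_nat_mult)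
  qed
  also have "\<dots> = w * ((1 - z ^ N) / (1 - z))" using z1 by (simp add: sum_distrib_left[symmetric] sum_gp_strict)
  finally have "norm (\<Sum>j\<in>{m..n}. exp (- (\<i> * of_int j * of_real x))) = norm (1 - z ^ N) / norm (1 - z)"
    by (simp add: w_def norm_mult norm_divide)
  also have "\<dots> \<le> 2 / norm (1 - z)"
  proof (intro divide_right_mono)
    have "norm (1 - z ^ N) \<le> norm (1::complex) + norm (z ^ N)" by (rule norm_triangle_ineq4)
    also have "norm (z ^ N) = 1" by (simp add: z_def norm_power norm_exp_eq_Re)
    finally show "norm (1 - z ^ N) \<le> 2" by simp
  qed simp
  also have "\<dots> \<le> 2 / (\<bar>x\<bar> / 4)"
  proof -
    have "norm (1 - z) > 0" using z1 by simp
    then show ?thesis using zne assms by (intro divide_left_mono) auto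
  qed
  also have "\<dots> = 8 / \<bar>x\<bar>" by simp
  finally show ?thesis .
qed

lemma dirichlet_bound:
  fixes x :: real and m n :: int
  assumes "m \<le> n" "x \<noteq> 0" "\<bar>x\<bar> \<le> pi"
  shows "norm (\<Sum>j\<in>{m..n}. exp (- (\<i> * of_int j * of_real x)))
           \<le> 8 * real (card {m..n}) * min 1 (1 / (real (card {m..n}) * \<bar>x\<bar>))"
proof -
  define N where "N = real (card {m..n})"
  have N: "N \<ge> 1" using assms by (simp add: N_def)
  have ax: "\<bar>x\<bar> > 0" using assms by simp
  show ?thesis
  proof (cases "1 \<le> 1 / (N * \<bar>x\<bar>)")
    case True
    then show ?thesis using dirichlet_card_bound[of x m n] N by (simp add: N_def min_def)
  next
    case False
    then have "min 1 (1 / (N * \<bar>x\<bar>)) = 1 / (N * \<bar>x\<bar>)" by simp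
    then have "8 * N * min 1 (1 / (N * \<bar>x\<bar>)) = 8 / \<bar>x\<bar>" using N ax by (simp add: field_simps)
    then show ?thesis using dirichlet_x_bound[OF assms(2,3), where m=m and n=n] by (simp add: N_def)
  qed
qed

lemma young_point:
  fixes p F h y s X A :: real
  assumes p: "1 < p" and F: "0 \<le> F" and h: "0 \<le> h" and y: "0 \<le> y" and y0: "y = 0 \<Longrightarrow> h = 0"
    and X: "0 < X" and A: "0 < A"
  shows "F * h \<le> X powr (1/p) * A powr ((p-1)/p) *
           (h * (F powr p * y powr s) / (p * X) + h * y powr (- (s / (p - 1))) / ((p / (p - 1)) * A))"
proof (cases "h = 0 \<or> F = 0")
  case True
  have "0 \<le> X powr (1/p) * A powr ((p-1)/p) *
           (h * (F powr p * y powr s) / (p * X) + h * y powr (- (s / (p - 1))) / ((p / (p - 1)) * A))"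
    using p h X A by (intro mult_nonneg_nonneg add_nonneg_nonneg divide_nonneg_pos) auto
  then show ?thesis using True by auto
next
  case False
  then have hp: "h > 0" and Fp: "F > 0" using h F by auto
  then have yp: "y > 0" using y y0 by force
  define a where "a = F powr p * y powr s / X"
  define b where "b = y powr (- (s / (p - 1))) / A"
  have a: "a > 0" and b: "b > 0" using Fp yp X A by (auto simp: a_def b_def)
  have "a powr (1/p) * b powr ((p-1)/p) \<le> (1/p) * a + ((p-1)/p) * b"
    using p a b by (intro Youngs_inequality_0) (auto simp: field_simps)
  moreover have "a powr (1/p) * b powr ((p-1)/p) = F / (X powr (1/p) * A powr ((p-1)/p))"
  proof -
    have "ln (a powr (1/p) * b powr ((p-1)/p)) = ln (F / (X powr (1/p) * A powr ((p-1)/p)))"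
      using a b Fp yp X A p
      by (simp add: ln_mult ln_div ln_powr a_def b_def field_simps)
    then show ?thesis using a b Fp X A by (simp add: ln_inj_iff)
  qed
  ultimately have "F \<le> X powr (1/p) * A powr ((p-1)/p) * ((1/p) * a + ((p-1)/p) * b)"
    using X A by (simp add: field_simps)
  then have "F * h \<le> X powr (1/p) * A powr ((p-1)/p) * ((1/p) * a + ((p-1)/p) * b) * h"
    using hp by (simp add: mult_right_mono)
  also have "\<dots> = X powr (1/p) * A powr ((p-1)/p) *
           (h * (F powr p * y powr s) / (p * X) + h * y powr (- (s / (p - 1))) / ((p / (p - 1)) * A))"
    using p by (simp add: a_def b_def field_simps)
  finally show ?thesis .
qed

lemma holder_final:
  fixes p G X A :: real
  assumes p: "1 < p" and G: "0 \<le> G" and X: "0 \<le> X" and A: "0 < A"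
    and H: "\<And>X'. 0 < X' \<Longrightarrow> X \<le> X' \<Longrightarrow> G \<le> X' powr (1/p) * A powr ((p-1)/p)"
  shows "G powr p \<le> X * A powr (p - 1)"
proof (rule field_le_epsilon)
  fix e :: real assume e: "0 < e"
  have Ap: "A powr (p - 1) > 0" using A by simp
  define X' where "X' = X + e / A powr (p - 1)"
  have "e / A powr (p - 1) > 0" using e Ap by (rule divide_pos_pos)
  then have X': "X' > 0" "X \<le> X'" using X by (auto simp: X'_def)
  have "G powr p \<le> (X' powr (1/p) * A powr ((p-1)/p)) powr p"
    using H[OF X'] G p by (intro powr_mono2) auto
  also have "\<dots> = X' * A powr (p - 1)"
    using X' A p by (simp add: powr_mult powr_powr)
  also have "\<dots> = X * A powr (p - 1) + e" using Ap by (simp add: X'_def field_simps)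
  finally show "G powr p \<le> X * A powr (p - 1) + e" .
qed

definition kern :: "real \<Rightarrow> real \<Rightarrow> real" where
  "kern k x = min 1 (1 / (k * \<bar>x\<bar>))"

lemma kern_nonneg: "k \<ge> 0 \<Longrightarrow> kern k x \<ge> 0" by (simp add: kern_def)
lemma kern_le1: "kern k x \<le> 1" by (simp add: kern_def)
lemma kern_zero [simp]: "kern k 0 = 0" by (simp add: kern_def)
lemma kern_mono: "0 < k \<Longrightarrow> k \<le> k' \<Longrightarrow> kern k' x \<le> kern k x"
proof (cases "x = 0")
  case False
  assume k: "0 < k" "k \<le> k'"
  have "1/(k'*\<bar>x\<bar>) \<le> 1/(k*\<bar>x\<bar>)" using k False
    by (intro divide_left_mono mult_right_mono mult_pos_pos) auto
  then show ?thesis unfolding kern_def by (intro min.mono) auto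
qed (simp)

lemma kern_measurable [measurable]: "kern k \<in> borel_measurable borel"
  unfolding kern_def by measurable

lemma hk_to_lborel:
  fixes g :: "real \<Rightarrow> real"
  assumes g: "g \<in> borel_measurable borel" and S: "S \<in> sets borel"
    and I: "(g has_integral I) S" and nn: "\<And>x. x \<in> S \<Longrightarrow> 0 \<le> g x"
  shows "set_integrable lborel S g" "(LINT x:S|lborel. g x) = I"
proof -
  have "g absolutely_integrable_on S"
    using I nn by (intro nonnegative_absolutely_integrable_1) (auto simp: integrable_on_def)
  then have "integrable lebesgue (\<lambda>x. indicator S x *\<^sub>R g x)" by (simp add: set_integrable_def)
  moreover have "(\<lambda>x. indicator S x *\<^sub>R g x) \<in> borel_measurable lborel" using g S by measurable
  ultimately show si: "set_integrable lborel S g" by (simp add: set_integrable_def integrable_completion)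
  show "(LINT x:S|lborel. g x) = I"
    using set_borel_integral_eq_integral(2)[OF si] I by (simp add: integral_unique)
qed

lemma Ak_bound:
  fixes k gm :: real
  assumes k: "1 \<le> k" and gm: "0 < gm" "gm < 1"
  shows "set_integrable lborel {-pi..pi} (\<lambda>x. kern k x * \<bar>x\<bar> powr (- gm))"
        "(LINT x:{-pi..pi}|lborel. kern k x * \<bar>x\<bar> powr (- gm)) \<le> 2 * (1/(1-gm) + 1/gm) * k powr (gm - 1)"
proof -
  define a where "a = 1 / k"
  have a01: "0 < a" "a \<le> 1" using k by (auto simp: a_def)
  have a: "0 < a" "a \<le> 1" "a \<le> pi" using a01 pi_gt3 by auto
  define g where "g x = kern k x * \<bar>x\<bar> powr (- gm)" for x
  have g_even: "g (-x) = g x" for x by (simp add: g_def kern_def)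
  have I1: "(g has_integral (a powr (1 - gm) / (1 - gm))) {0..a}"
  proof -
    have "((\<lambda>x. x powr (- gm)) has_integral (a powr (- gm + 1) / (- gm + 1))) {0..a}"
      using gm a by (intro has_integral_powr_from_0) auto
    moreover have "g x = x powr (- gm)" if "x \<in> {0..a}" for x
    proof (cases "x = 0")
      case False
      then have "k * x \<le> 1" using that k by (auto simp: a_def field_simps)
      then have "1 \<le> 1 / (k * x)" using False that k by (simp add: field_simps)
      then show ?thesis using that by (simp add: g_def kern_def)
    qed (simp add: g_def)
    ultimately show ?thesis by (subst has_integral_cong) (auto simp: add.commute)
  qed
  define I2 where "I2 = (\<lambda>x. - a * x powr (- gm) / gm) pi - (\<lambda>x. - a * x powr (- gm) / gm) a"
  have I2: "(g has_integral I2) {a..pi}"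
  proof -
    have "((\<lambda>x. a * x powr (-1 - gm)) has_integral
            ((\<lambda>x. - a * x powr (- gm) / gm) pi - (\<lambda>x. - a * x powr (- gm) / gm) a)) {a..pi}"
    proof (rule fundamental_theorem_of_calculus)
      show "a \<le> pi" using a by simp
      fix x assume x: "x \<in> {a..pi}"
      then have "x > 0" using a by auto
      then have "((\<lambda>x. - a * x powr (- gm) / gm) has_real_derivative a * x powr (- gm - 1)) (at x)"
        using gm by (auto intro!: derivative_eq_intros)
      note D = this
      have e: "-1 - gm = -gm - 1" by simp
      have "((\<lambda>x. - a * x powr (- gm) / gm) has_real_derivative a * x powr (-1 - gm)) (at x within {a..pi})"
        unfolding e by (rule has_field_derivative_at_within[OF D])
      then show "((\<lambda>x. - a * x powr (- gm) / gm) has_vector_derivative a * x powr (-1 - gm)) (at x within {a..pi})"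
        by (simp add: has_real_derivative_iff_has_vector_derivative)
    qed
    moreover have "g x = a * x powr (-1 - gm)" if "x \<in> {a..pi}" for x
    proof -
      have x: "x > 0" "a \<le> x" using that a by auto
      then have "1 / (k * x) \<le> 1" using k by (simp add: a_def field_simps)
      then have "kern k x = a / x" using x by (simp add: kern_def a_def min_def)
      moreover have "x powr (-1 - gm) = x powr (- gm) / x" using x by (simp add: powr_diff powr_minus field_simps)
      ultimately show ?thesis using x by (simp add: g_def)
    qed
    ultimately show ?thesis unfolding I2_def by (subst has_integral_cong) auto
  qed
  have I0: "(g has_integral (a powr (1 - gm) / (1 - gm) + I2)) {0..pi}"
    using I1 I2 a by (intro has_integral_combine) auto
  then have I0': "(g has_integral (a powr (1 - gm) / (1 - gm) + I2)) {-pi..0}"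
  proof -
    have "((\<lambda>x. g (-x)) has_integral (a powr (1 - gm) / (1 - gm) + I2)) {-pi..-0}"
      using I0 by (simp only: has_integral_reflect_real)
    moreover have "(\<lambda>x. g (-x)) = g" using g_even by auto
    ultimately show ?thesis by simp
  qed
  have Iall: "(g has_integral 2 * (a powr (1 - gm) / (1 - gm) + I2)) {-pi..pi}"
  proof -
    have "(g has_integral ((a powr (1 - gm) / (1 - gm) + I2) + (a powr (1 - gm) / (1 - gm) + I2))) {-pi..pi}"
      by (rule has_integral_combine[OF _ _ I0' I0]) auto
    then show ?thesis by (simp only: mult_2)
  qed
  have gm_meas: "g \<in> borel_measurable borel" unfolding g_def by measurable
  have gnn: "0 \<le> g x" for x using k unfolding g_def by (intro mult_nonneg_nonneg kern_nonneg) auto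
  note hk = hk_to_lborel[OF gm_meas _ Iall gnn]
  show "set_integrable lborel {-pi..pi} (\<lambda>x. kern k x * \<bar>x\<bar> powr (- gm))"
    using hk(1) by (simp add: g_def)
  have "0 \<le> a * pi powr (- gm) / gm" using a gm by simp
  then have "I2 \<le> a * a powr (- gm) / gm"
    unfolding I2_def by simp
  also have "a * a powr (- gm) = a powr (1 - gm)"
  proof -
    have "a * a powr (- gm) = a powr 1 * a powr (- gm)" using a by simp
    also have "\<dots> = a powr (1 + - gm)" by (rule powr_add[symmetric])
    finally show ?thesis by simp
  qed
  finally have I2b: "I2 \<le> a powr (1 - gm) / gm" .
  have "a powr (1 - gm) = 1 powr (1 - gm) / k powr (1 - gm)"
    unfolding a_def using k by (intro powr_divide)
  also have "\<dots> = k powr (- (1 - gm))" using powr_minus_divide[of k "1 - gm"] by simp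
  finally have ak: "a powr (1 - gm) = k powr (gm - 1)" by simp
  have "a powr (1 - gm) / (1 - gm) + I2 \<le> k powr (gm - 1) / (1 - gm) + k powr (gm - 1) / gm"
    using I2b ak by simp
  also have "\<dots> = (1/(1-gm) + 1/gm) * k powr (gm - 1)" by (simp add: field_simps)
  finally have "2 * (a powr (1 - gm) / (1 - gm) + I2) \<le> 2 * ((1/(1-gm) + 1/gm) * k powr (gm - 1))"
    by (rule mult_left_mono) simp
  then have "2 * (a powr (1 - gm) / (1 - gm) + I2) \<le> 2 * (1/(1-gm) + 1/gm) * k powr (gm - 1)"
    by (simp only: mult.assoc)
  then show "(LINT x:{-pi..pi}|lborel. kern k x * \<bar>x\<bar> powr (- gm)) \<le> 2 * (1/(1-gm) + 1/gm) * k powr (gm - 1)"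
    using hk(2) by (simp add: g_def)
qed

lemma sint_const: "set_integrable lborel {-pi..pi} (\<lambda>x. c :: real)"
  by (intro borel_integrable_atLeastAtMost') auto

lemma int_F:
  fixes f :: "real \<Rightarrow> complex" and p :: real
  assumes p: "1 < p" and fm: "f \<in> borel_measurable lborel"
    and fp: "set_integrable lborel {-pi..pi} (\<lambda>x. norm (f x) powr p)"
  shows "set_integrable lborel {-pi..pi} (\<lambda>x. norm (f x))"
proof (rule set_integrable_bound[where f = "\<lambda>x. 1 + norm (f x) powr p"])
  show "set_integrable lborel {-pi..pi} (\<lambda>x. 1 + norm (f x) powr p)"
    using sint_const fp by (rule set_integral_add)
  show "set_borel_measurable lborel {-pi..pi} (\<lambda>x. norm (f x))"
    unfolding set_borel_measurable_def using fm by measurable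
  have "norm (f x) \<le> 1 + norm (f x) powr p" for x
  proof (cases "norm (f x) \<le> 1")
    case False
    then have "norm (f x) powr 1 \<le> norm (f x) powr p" using p by (intro powr_mono) auto
    then show ?thesis using False by simp
  qed (simp add: add_increasing2)
  then show "AE x in lborel. x \<in> {-pi..pi} \<longrightarrow> norm (norm (f x)) \<le> norm (1 + norm (f x) powr p)"
    by (auto intro!: AE_I2)
qed

lemma int_bounded_mult:
  fixes F g :: "real \<Rightarrow> real"
  assumes F: "set_integrable lborel {-pi..pi} F" and gm: "g \<in> borel_measurable borel"
    and Fm: "F \<in> borel_measurable borel"
    and gb: "\<And>x. x \<in> {-pi..pi} \<Longrightarrow> \<bar>g x\<bar> \<le> B"
  shows "set_integrable lborel {-pi..pi} (\<lambda>x. g x * F x)"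
proof (rule set_integrable_bound[where f = "\<lambda>x. B * F x"])
  show "set_integrable lborel {-pi..pi} (\<lambda>x. B * F x)" using F by simp
  show "set_borel_measurable lborel {-pi..pi} (\<lambda>x. g x * F x)"
    unfolding set_borel_measurable_def using gm Fm by measurable
  have "\<bar>g x * F x\<bar> \<le> \<bar>B * F x\<bar>" if "x \<in> {-pi..pi}" for x
    using gb[OF that] by (simp add: abs_mult mult_right_mono)
  then show "AE x in lborel. x \<in> {-pi..pi} \<longrightarrow> norm (g x * F x) \<le> norm (B * F x)"
    by (auto intro!: AE_I2)
qed

lemma int_f_exp:
  fixes f :: "real \<Rightarrow> complex" and g :: "real \<Rightarrow> complex"
  assumes fm: "f \<in> borel_measurable lborel" and F: "set_integrable lborel {-pi..pi} (\<lambda>x. norm (f x))"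
    and gm: "g \<in> borel_measurable borel" and gb: "\<And>x. norm (g x) \<le> B"
  shows "set_integrable lborel {-pi..pi} (\<lambda>x. f x * g x)"
proof (rule set_integrable_bound[where f = "\<lambda>x. B * norm (f x)"])
  show "set_integrable lborel {-pi..pi} (\<lambda>x. B * norm (f x))" using F by simp
  show "set_borel_measurable lborel {-pi..pi} (\<lambda>x. f x * g x)"
    unfolding set_borel_measurable_def using gm fm by measurable
  have "norm (f x * g x) \<le> norm (B * norm (f x))" for x
  proof -
    have "norm (f x * g x) = norm (f x) * norm (g x)" by (rule norm_mult)
    also have "\<dots> \<le> norm (f x) * B" using gb[of x] by (intro mult_left_mono) auto
    also have "\<dots> = B * norm (f x)" by simp
    finally have "norm (f x * g x) \<le> B * norm (f x)" .
    also have "\<dots> \<le> norm (B * norm (f x))" by simp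
    finally show ?thesis .
  qed
  then show "AE x in lborel. x \<in> {-pi..pi} \<longrightarrow> norm (f x * g x) \<le> norm (B * norm (f x))"
    by (auto intro!: AE_I2)
qed

lemma exp_ix_measurable [measurable]: "(\<lambda>x::real. exp (- (\<i> * of_int j * of_real x))) \<in> borel_measurable borel"
  by (intro borel_measurable_continuous_onI continuous_intros)

lemma fourier_sum:
  fixes f :: "real \<Rightarrow> complex"
  assumes fm: "f \<in> borel_measurable lborel" and F: "set_integrable lborel {-pi..pi} (\<lambda>x. norm (f x))"
  shows "(\<Sum>j\<in>{m..n}. fourier_coeff f j) = complex_of_real (1 / (2 * pi)) *
           (LINT x:{-pi..pi}|lborel. f x * (\<Sum>j\<in>{m..n}. exp (- (\<i> * of_int j * of_real x))))"
proof -
  have I: "integrable lborel (\<lambda>x. indicator {-pi..pi} x *\<^sub>R (f x * exp (- (\<i> * of_int j * of_real x))))" for j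
    using int_f_exp[OF fm F, of "\<lambda>x. exp (- (\<i> * of_int j * of_real x))" 1]
    by (simp add: set_integrable_def)
  have "(\<Sum>j\<in>{m..n}. fourier_coeff f j) = complex_of_real (1 / (2 * pi)) *
          (\<Sum>j\<in>{m..n}. LINT x:{-pi..pi}|lborel. f x * exp (- (\<i> * of_int j * of_real x)))"
    unfolding fourier_coeff_def by (simp add: sum_distrib_left)
  also have "(\<Sum>j\<in>{m..n}. LINT x:{-pi..pi}|lborel. f x * exp (- (\<i> * of_int j * of_real x)))
      = (LINT x:{-pi..pi}|lborel. f x * (\<Sum>j\<in>{m..n}. exp (- (\<i> * of_int j * of_real x))))"
    unfolding set_lebesgue_integral_def
    by (subst Bochner_Integration.integral_sum[symmetric, OF I]) (simp add: scaleR_sum_right sum_distrib_left)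
  finally show ?thesis .
qed

lemma fourier_block_bound:
  fixes f :: "real \<Rightarrow> complex" and k :: real and m n :: int
  assumes fm: "f \<in> borel_measurable lborel" and F: "set_integrable lborel {-pi..pi} (\<lambda>x. norm (f x))"
    and mn: "m \<le> n" and k: "1 \<le> k" "k \<le> real (card {m..n})"
  shows "norm (\<Sum>j\<in>{m..n}. fourier_coeff f j) / real (card {m..n})
          \<le> 2 * (LINT x:{-pi..pi}|lborel. norm (f x) * kern k x)"
proof -
  define N where "N = real (card {m..n})"
  have N: "1 \<le> N" "k \<le> N" using mn k by (auto simp: N_def)
  define D where "D x = (\<Sum>j\<in>{m..n}. exp (- (\<i> * of_int j * of_real x)))" for x
  have Dm: "D \<in> borel_measurable borel" unfolding D_def by measurable
  have Db: "norm (D x) \<le> N" for x unfolding D_def N_def by (rule dirichlet_card_bound)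
  have IfD: "set_integrable lborel {-pi..pi} (\<lambda>x. f x * D x)"
    by (rule int_f_exp[OF fm F Dm Db])
  have Fm: "(\<lambda>x. norm (f x)) \<in> borel_measurable borel" using fm by measurable
  have IFk: "set_integrable lborel {-pi..pi} (\<lambda>x. kern K x * norm (f x))" if "K \<ge> 0" for K
    by (rule int_bounded_mult[OF F _ Fm, where B = 1]) (use that in \<open>auto simp: kern_nonneg kern_le1 abs_of_nonneg\<close>)
  have eq1: "norm (\<Sum>j\<in>{m..n}. fourier_coeff f j) = (1 / (2 * pi)) * norm (LINT x:{-pi..pi}|lborel. f x * D x)"
    unfolding fourier_sum[OF fm F] D_def by (simp add: norm_mult norm_divide)
  have "norm (LINT x:{-pi..pi}|lborel. f x * D x) \<le> (LINT x:{-pi..pi}|lborel. norm (f x * D x))"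
    unfolding set_lebesgue_integral_def
    by (rule order.trans[OF integral_norm_bound]) (simp add: norm_scaleR)
  also have "\<dots> \<le> (LINT x:{-pi..pi}|lborel. 8 * N * (kern N x * norm (f x)))"
  proof (rule set_integral_mono_AE)
    show "set_integrable lborel {-pi..pi} (\<lambda>x. norm (f x * D x))"
      using integrable_norm[OF IfD[unfolded set_integrable_def]] by (simp add: set_integrable_def)
    show "set_integrable lborel {-pi..pi} (\<lambda>x. 8 * N * (kern N x * norm (f x)))"
      using IFk[of N] N by simp
    have pw: "norm (f x * D x) \<le> 8 * N * (kern N x * norm (f x))" if "x \<in> {-pi..pi}" "x \<noteq> 0" for x
    proof -
      have "norm (D x) \<le> 8 * N * kern N x"
        using dirichlet_bound[OF mn that(2)] that(1) unfolding D_def N_def kern_def by auto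
      then have "norm (D x) * norm (f x) \<le> (8 * N * kern N x) * norm (f x)" by (rule mult_right_mono) simp
      then show ?thesis by (simp add: norm_mult mult.commute mult.left_commute)
    qed
    then show "AE x\<in>{-pi..pi} in lborel. norm (f x * D x) \<le> 8 * N * (kern N x * norm (f x))"
      using AE_lborel_singleton[of 0] by eventually_elim (use pw in auto)
  qed
  also have "\<dots> \<le> (LINT x:{-pi..pi}|lborel. 8 * N * (kern k x * norm (f x)))"
  proof (rule set_integral_mono)
    show "set_integrable lborel {-pi..pi} (\<lambda>x. 8 * N * (kern N x * norm (f x)))"
      using IFk[of N] N by simp
    show "set_integrable lborel {-pi..pi} (\<lambda>x. 8 * N * (kern k x * norm (f x)))"
      using IFk[of k] k by simp
    fix x show "8 * N * (kern N x * norm (f x)) \<le> 8 * N * (kern k x * norm (f x))"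
      using kern_mono[of k N x] N k by (intro mult_left_mono mult_right_mono) auto
  qed
  also have "\<dots> = 8 * N * (LINT x:{-pi..pi}|lborel. norm (f x) * kern k x)"
    by (simp add: mult.commute)
  finally have "norm (LINT x:{-pi..pi}|lborel. f x * D x) \<le> 8 * N * (LINT x:{-pi..pi}|lborel. norm (f x) * kern k x)" .
  then have "norm (\<Sum>j\<in>{m..n}. fourier_coeff f j) \<le> (1 / (2 * pi)) * (8 * N * (LINT x:{-pi..pi}|lborel. norm (f x) * kern k x))"
    unfolding eq1 by (rule mult_left_mono) simp
  moreover have G0: "0 \<le> (LINT x:{-pi..pi}|lborel. norm (f x) * kern k x)"
    unfolding set_lebesgue_integral_def using k
    by (intro integral_nonneg_AE AE_I2) (auto simp: kern_nonneg)
  ultimately have "norm (\<Sum>j\<in>{m..n}. fourier_coeff f j) / N \<le> (4 / pi) * (LINT x:{-pi..pi}|lborel. norm (f x) * kern k x)"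
    using N by (simp add: field_simps)
  also have "\<dots> \<le> 2 * (LINT x:{-pi..pi}|lborel. norm (f x) * kern k x)"
    using G0 pi_gt3 by (intro mult_right_mono) (auto simp: field_simps)
  finally show ?thesis by (simp add: N_def)
qed

lemma net_max_bound:
  fixes f :: "real \<Rightarrow> complex" and k :: nat
  assumes fm: "f \<in> borel_measurable lborel" and F: "set_integrable lborel {-pi..pi} (\<lambda>x. norm (f x))"
    and k: "1 \<le> k"
  shows "0 \<le> net_max (fourier_coeff f) k"
        "net_max (fourier_coeff f) k \<le> 2 * (LINT x:{-pi..pi}|lborel. norm (f x) * kern (real k) x)"
proof -
  define T where "T = {norm (\<Sum>j\<in>w. fourier_coeff f j) / real (card w) | w. w \<in> int_intervals \<and> card w \<ge> k}"
  have nm: "net_max (fourier_coeff f) k = Sup T" by (simp add: net_max_def T_def)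
  define w0 where "w0 = {0..int k - 1}"
  have cw0: "card w0 = k" using k by (simp add: w0_def)
  have w0: "w0 \<in> int_intervals" using k unfolding int_intervals_def w0_def by force
  have inT: "norm (\<Sum>j\<in>w0. fourier_coeff f j) / real (card w0) \<in> T"
    unfolding T_def using w0 cw0 by blast
  have ub: "t \<le> 2 * (LINT x:{-pi..pi}|lborel. norm (f x) * kern (real k) x)" if "t \<in> T" for t
  proof -
    obtain w where w: "t = norm (\<Sum>j\<in>w. fourier_coeff f j) / real (card w)" "w \<in> int_intervals" "card w \<ge> k"
      using \<open>t \<in> T\<close> unfolding T_def by blast
    then obtain m n where mn: "w = {m..n}" "m \<le> n" unfolding int_intervals_def by blast
    show ?thesis unfolding w(1) mn(1)
      by (rule fourier_block_bound[OF fm F mn(2)]) (use k w(3) mn(1) in auto)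
  qed
  have T0: "T \<noteq> {}" using inT by blast
  show "net_max (fourier_coeff f) k \<le> 2 * (LINT x:{-pi..pi}|lborel. norm (f x) * kern (real k) x)"
    unfolding nm by (rule cSup_least[OF T0 ub])
  have bdd: "bdd_above T" using ub by (auto simp: bdd_above_def)
  have "0 \<le> norm (\<Sum>j\<in>w0. fourier_coeff f j) / real (card w0)" by simp
  also have "\<dots> \<le> Sup T" by (rule cSup_upper[OF inT bdd])
  finally show "0 \<le> net_max (fourier_coeff f) k" unfolding nm .
qed

lemma holder_G:
  fixes f :: "real \<Rightarrow> complex" and p s k :: real
  assumes p: "1 < p" and fm: "f \<in> borel_measurable lborel"
    and fp: "set_integrable lborel {-pi..pi} (\<lambda>x. norm (f x) powr p)"
    and F: "set_integrable lborel {-pi..pi} (\<lambda>x. norm (f x))"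
    and s: "0 < s" "s < 1" "s / (p - 1) < 1" and k: "1 \<le> k"
  shows "(LINT x:{-pi..pi}|lborel. norm (f x) * kern k x) powr p
     \<le> (LINT x:{-pi..pi}|lborel. kern k x * (norm (f x) powr p * \<bar>x\<bar> powr s))
        * (2 * (1/(1 - s/(p-1)) + 1/(s/(p-1))) * k powr (s/(p-1) - 1)) powr (p - 1)"
proof -
  define gm where "gm = s / (p - 1)"
  have gm: "0 < gm" "gm < 1" using s p by (auto simp: gm_def)
  define A' where "A' = 2 * (1/(1 - gm) + 1/gm) * k powr (gm - 1)"
  have A'p: "A' > 0" unfolding A'_def using gm k by (intro mult_pos_pos add_pos_pos) auto
  define G where "G = (LINT x:{-pi..pi}|lborel. norm (f x) * kern k x)"
  define X where "X = (LINT x:{-pi..pi}|lborel. kern k x * (norm (f x) powr p * \<bar>x\<bar> powr s))"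
  define A where "A = (LINT x:{-pi..pi}|lborel. kern k x * \<bar>x\<bar> powr (- gm))"
  note Ak = Ak_bound[OF k gm]
  have AA': "A \<le> A'" using Ak(2) by (simp add: A_def A'_def)
  have Fm: "(\<lambda>x. norm (f x)) \<in> borel_measurable borel" using fm by measurable
  have Fpm: "(\<lambda>x. norm (f x) powr p) \<in> borel_measurable borel" using fm by measurable
  have IG: "set_integrable lborel {-pi..pi} (\<lambda>x. norm (f x) * kern k x)"
  proof -
    have "set_integrable lborel {-pi..pi} (\<lambda>x. kern k x * norm (f x))"
      by (rule int_bounded_mult[OF F _ Fm, where B = 1]) (use k in \<open>auto simp: kern_nonneg kern_le1 abs_of_nonneg\<close>)
    then show ?thesis by (simp add: mult.commute)
  qed
  have IX: "set_integrable lborel {-pi..pi} (\<lambda>x. kern k x * (norm (f x) powr p * \<bar>x\<bar> powr s))"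
  proof -
    have "set_integrable lborel {-pi..pi} (\<lambda>x. (kern k x * \<bar>x\<bar> powr s) * norm (f x) powr p)"
    proof (rule int_bounded_mult[OF fp _ Fpm, where B = "pi powr s"])
      show "(\<lambda>x. kern k x * \<bar>x\<bar> powr s) \<in> borel_measurable borel" by measurable
      fix x :: real assume x: "x \<in> {-pi..pi}"
      have "\<bar>kern k x * \<bar>x\<bar> powr s\<bar> = kern k x * \<bar>x\<bar> powr s" using k by (simp add: kern_nonneg)
      also have "\<dots> \<le> 1 * \<bar>x\<bar> powr s" using k by (intro mult_right_mono kern_le1) auto
      also have "\<dots> \<le> pi powr s" using x s by (auto intro!: powr_mono2)
      finally show "\<bar>kern k x * \<bar>x\<bar> powr s\<bar> \<le> pi powr s" .
    qed
    then show ?thesis by (simp add: mult_ac)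
  qed
  have IA: "set_integrable lborel {-pi..pi} (\<lambda>x. kern k x * \<bar>x\<bar> powr (- gm))" by (rule Ak(1))
  have G0: "0 \<le> G" unfolding G_def set_lebesgue_integral_def using k
    by (intro integral_nonneg_AE AE_I2) (auto simp: kern_nonneg)
  have X0: "0 \<le> X" unfolding X_def set_lebesgue_integral_def using k
    by (intro integral_nonneg_AE AE_I2) (auto simp: kern_nonneg)
  have "G powr p \<le> X * A' powr (p - 1)"
  proof (rule holder_final[OF p G0 X0 A'p])
    fix X' :: real assume X': "0 < X'" "X \<le> X'"
    define c where "c = X' powr (1/p) * A' powr ((p-1)/p)"
    have c0: "0 \<le> c" by (simp add: c_def)
    have "G \<le> (LINT x:{-pi..pi}|lborel. c * (kern k x * (norm (f x) powr p * \<bar>x\<bar> powr s) / (p * X')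
                 + kern k x * \<bar>x\<bar> powr (- (s / (p - 1))) / ((p / (p - 1)) * A')))"
      unfolding G_def
    proof (rule set_integral_mono[OF IG])
      show "set_integrable lborel {-pi..pi} (\<lambda>x. c * (kern k x * (norm (f x) powr p * \<bar>x\<bar> powr s) / (p * X')
                 + kern k x * \<bar>x\<bar> powr (- (s / (p - 1))) / ((p / (p - 1)) * A')))"
        using IX IA by (simp add: gm_def)
      fix x :: real
      show "norm (f x) * kern k x \<le> c * (kern k x * (norm (f x) powr p * \<bar>x\<bar> powr s) / (p * X')
                 + kern k x * \<bar>x\<bar> powr (- (s / (p - 1))) / ((p / (p - 1)) * A'))"
        unfolding c_def
        by (rule young_point[OF p]) (use k X' A'p in \<open>auto simp: kern_nonneg\<close>)
    qed
    also have "\<dots> = c * (X / (p * X') + A / ((p / (p - 1)) * A'))"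
      using IX IA by (simp add: X_def A_def gm_def set_integral_add(2))
    also have "\<dots> \<le> c * (1 / p + (p - 1) / p)"
    proof (intro mult_left_mono[OF _ c0] add_mono)
      show "X / (p * X') \<le> 1 / p" using X' p by (simp add: field_simps)
      have "A / ((p / (p - 1)) * A') \<le> A' / ((p / (p - 1)) * A')"
        using AA' A'p p by (intro divide_right_mono) auto
      also have "\<dots> = (p - 1) / p" using A'p p by (simp add: field_simps)
      finally show "A / ((p / (p - 1)) * A') \<le> (p - 1) / p" .
    qed
    also have "\<dots> = c" using p by (simp add: field_simps)
    finally show "G \<le> X' powr (1/p) * A' powr ((p-1)/p)" by (simp add: c_def)
  qed
  then show ?thesis by (simp add: G_def X_def A'_def gm_def)
qed

lemma term_bound:
  fixes f :: "real \<Rightarrow> complex" and p s :: real and k :: nat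
  assumes p: "1 < p" and fm: "f \<in> borel_measurable lborel"
    and fp: "set_integrable lborel {-pi..pi} (\<lambda>x. norm (f x) powr p)"
    and F: "set_integrable lborel {-pi..pi} (\<lambda>x. norm (f x))"
    and s: "0 < s" "s < 1" "s / (p - 1) < 1" and k: "1 \<le> k"
  shows "net_term (p / (p - 1)) p (fourier_coeff f) k
     \<le> (2 powr p * (2 * (1/(1 - s/(p-1)) + 1/(s/(p-1)))) powr (p - 1)) *
        (real k powr (s - 1) * (LINT x:{-pi..pi}|lborel. kern (real k) x * (norm (f x) powr p * \<bar>x\<bar> powr s)))"
proof -
  define gm where "gm = s / (p - 1)"
  define B where "B = 2 * (1/(1 - gm) + 1/gm)"
  have gm: "0 < gm" "gm < 1" using s p by (auto simp: gm_def)
  have B: "B > 0" unfolding B_def using gm by (intro mult_pos_pos add_pos_pos) auto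
  define G where "G = (LINT x:{-pi..pi}|lborel. norm (f x) * kern (real k) x)"
  define X where "X = (LINT x:{-pi..pi}|lborel. kern (real k) x * (norm (f x) powr p * \<bar>x\<bar> powr s))"
  define nm where "nm = net_max (fourier_coeff f) k"
  have nm: "0 \<le> nm" "nm \<le> 2 * G" using net_max_bound[OF fm F k] by (simp_all add: nm_def G_def)
  have kr: "1 \<le> real k" using k by simp
  have H: "G powr p \<le> X * (B * real k powr (gm - 1)) powr (p - 1)"
    using holder_G[OF p fm fp F s kr] by (simp add: G_def X_def B_def gm_def)
  have ex: "p / (p / (p - 1)) - 1 = p - 2" using p by (simp add: field_simps)
  have "net_term (p / (p - 1)) p (fourier_coeff f) k = real k powr (p - 2) * nm powr p"
    unfolding net_term_def ex nm_def ..
  also have "\<dots> \<le> real k powr (p - 2) * (2 * G) powr p"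
    using nm p by (intro mult_left_mono powr_mono2) auto
  also have "(2 * G) powr p = 2 powr p * G powr p"
    using nm by (intro powr_mult)
  also have "real k powr (p - 2) * (2 powr p * G powr p) \<le> real k powr (p - 2) * (2 powr p * (X * (B * real k powr (gm - 1)) powr (p - 1)))"
    using H by (intro mult_left_mono) auto
  also have "(B * real k powr (gm - 1)) powr (p - 1) = B powr (p - 1) * real k powr ((gm - 1) * (p - 1))"
    using B kr by (simp add: powr_mult powr_powr)
  also have "real k powr (p - 2) * (2 powr p * (X * (B powr (p - 1) * real k powr ((gm - 1) * (p - 1)))))
       = (2 powr p * B powr (p - 1)) * ((real k powr (p - 2) * real k powr ((gm - 1) * (p - 1))) * X)"
    by (simp add: mult_ac)
  also have "real k powr (p - 2) * real k powr ((gm - 1) * (p - 1)) = real k powr (p - 2 + (gm - 1) * (p - 1))"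
    by (rule powr_add[symmetric])
  also have "p - 2 + (gm - 1) * (p - 1) = s - 1" using p by (simp add: gm_def field_simps)
  finally show ?thesis by (simp add: X_def B_def gm_def)
qed

lemma pw_sum_bound:
  fixes s x a :: real
  assumes s: "0 < s" "s < 1" and a: "0 \<le> a"
  shows "(\<Sum>k=1..n. real k powr (s - 1) * (kern (real k) x * (a * \<bar>x\<bar> powr s)))
           \<le> (1/s + 1 + 3/(1-s)) * a"
proof (cases "x = 0")
  case True then show ?thesis using s a by simp
next
  case False
  then have y: "\<bar>x\<bar> > 0" by simp
  have "(\<Sum>k=1..n. real k powr (s - 1) * (kern (real k) x * (a * \<bar>x\<bar> powr s)))
      = (\<Sum>k=1..n. real k powr (s - 1) * min 1 (1 / (real k * \<bar>x\<bar>))) * (\<bar>x\<bar> powr s * a)"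
    unfolding sum_distrib_right by (intro sum.cong) (auto simp: kern_def mult_ac)
  also have "\<dots> \<le> ((1/s + 1 + 3/(1-s)) * (1/\<bar>x\<bar>) powr s) * (\<bar>x\<bar> powr s * a)"
    using ksum_bound[OF s y, of n] a by (intro mult_right_mono) auto
  also have "(1/\<bar>x\<bar>) powr s * \<bar>x\<bar> powr s = 1"
  proof -
    have "(1/\<bar>x\<bar>) powr s * \<bar>x\<bar> powr s = (1/\<bar>x\<bar> * \<bar>x\<bar>) powr s" using y by (intro powr_mult[symmetric])
    also have "\<dots> = 1" using y by simp
    finally show ?thesis .
  qed
  then have "((1/s + 1 + 3/(1-s)) * (1/\<bar>x\<bar>) powr s) * (\<bar>x\<bar> powr s * a) = (1/s + 1 + 3/(1-s)) * a"
    by (metis (no_types, lifting) mult.assoc mult.left_commute mult_1)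
  finally show ?thesis .
qed

lemma IX_lemma:
  fixes f :: "real \<Rightarrow> complex" and p s k :: real
  assumes fm: "f \<in> borel_measurable lborel"
    and fp: "set_integrable lborel {-pi..pi} (\<lambda>x. norm (f x) powr p)" and s: "0 < s" and k: "0 \<le> k"
  shows "set_integrable lborel {-pi..pi} (\<lambda>x. kern k x * (norm (f x) powr p * \<bar>x\<bar> powr s))"
proof -
  have Fpm: "(\<lambda>x. norm (f x) powr p) \<in> borel_measurable borel" using fm by measurable
  have "set_integrable lborel {-pi..pi} (\<lambda>x. (kern k x * \<bar>x\<bar> powr s) * norm (f x) powr p)"
  proof (rule int_bounded_mult[OF fp _ Fpm, where B = "pi powr s"])
    show "(\<lambda>x. kern k x * \<bar>x\<bar> powr s) \<in> borel_measurable borel" by measurable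
    fix x :: real assume x: "x \<in> {-pi..pi}"
    have "\<bar>kern k x * \<bar>x\<bar> powr s\<bar> = kern k x * \<bar>x\<bar> powr s" using k by (simp add: kern_nonneg)
    also have "\<dots> \<le> 1 * \<bar>x\<bar> powr s" using k by (intro mult_right_mono kern_le1) auto
    also have "\<dots> \<le> pi powr s" using x s by (auto intro!: powr_mono2)
    finally show "\<bar>kern k x * \<bar>x\<bar> powr s\<bar> \<le> pi powr s" .
  qed
  then show ?thesis by (simp add: mult_ac)
qed

lemma partial_sum_bound:
  fixes f :: "real \<Rightarrow> complex" and p s :: real
  assumes p: "1 < p" and fm: "f \<in> borel_measurable lborel"
    and fp: "set_integrable lborel {-pi..pi} (\<lambda>x. norm (f x) powr p)"
    and s: "0 < s" "s < 1" "s / (p - 1) < 1"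
  shows "(\<Sum>k=1..n. net_term (p / (p - 1)) p (fourier_coeff f) k)
     \<le> ((2 powr p * (2 * (1/(1 - s/(p-1)) + 1/(s/(p-1)))) powr (p - 1)) * (1/s + 1 + 3/(1-s)))
        * (LINT x:{-pi..pi}|lborel. norm (f x) powr p)"
proof -
  define C0 where "C0 = 2 powr p * (2 * (1/(1 - s/(p-1)) + 1/(s/(p-1)))) powr (p - 1)"
  define M where "M = 1/s + 1 + 3/(1-s)"
  have C0: "C0 \<ge> 0" by (simp add: C0_def)
  have F: "set_integrable lborel {-pi..pi} (\<lambda>x. norm (f x))" by (rule int_F[OF p fm fp])
  define \<phi> where "\<phi> k x = indicator {-pi..pi} x *\<^sub>R (real k powr (s - 1) * (kern (real k) x * (norm (f x) powr p * \<bar>x\<bar> powr s)))"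
    for k :: nat and x :: real
  have I\<phi>: "integrable lborel (\<phi> k)" for k
  proof -
    have "integrable lborel (\<lambda>x. real k powr (s - 1) * (indicator {-pi..pi} x *\<^sub>R (kern (real k) x * (norm (f x) powr p * \<bar>x\<bar> powr s))))"
      by (rule integrable_mult_right) (use IX_lemma[OF fm fp s(1), of "real k"] in \<open>simp add: set_integrable_def\<close>)
    then show ?thesis unfolding \<phi>_def by (simp add: mult_ac)
  qed
  have IM: "integrable lborel (\<lambda>x. indicator {-pi..pi} x *\<^sub>R (M * norm (f x) powr p))"
  proof -
    have "integrable lborel (\<lambda>x. M * (indicator {-pi..pi} x *\<^sub>R (norm (f x) powr p)))"
      by (rule integrable_mult_right) (use fp in \<open>simp add: set_integrable_def\<close>)
    then show ?thesis by (simp add: mult_ac)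
  qed
  have "(\<Sum>k=1..n. net_term (p / (p - 1)) p (fourier_coeff f) k)
      \<le> (\<Sum>k=1..n. C0 * (real k powr (s - 1) * (LINT x:{-pi..pi}|lborel. kern (real k) x * (norm (f x) powr p * \<bar>x\<bar> powr s))))"
    by (intro sum_mono) (use term_bound[OF p fm fp F s] in \<open>auto simp: C0_def\<close>)
  also have "\<dots> = C0 * (\<Sum>k=1..n. integral\<^sup>L lborel (\<phi> k))"
  proof -
    have "\<phi> k = (\<lambda>x. real k powr (s - 1) * (indicator {-pi..pi} x *\<^sub>R (kern (real k) x * (norm (f x) powr p * \<bar>x\<bar> powr s))))" for k
      by (auto simp: \<phi>_def fun_eq_iff mult_ac)
    then have "integral\<^sup>L lborel (\<phi> k) = real k powr (s - 1) * (LINT x:{-pi..pi}|lborel. kern (real k) x * (norm (f x) powr p * \<bar>x\<bar> powr s))" for k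
      by (simp add: set_lebesgue_integral_def)
    then show ?thesis by (simp add: sum_distrib_left)
  qed
  also have "(\<Sum>k=1..n. integral\<^sup>L lborel (\<phi> k)) = integral\<^sup>L lborel (\<lambda>x. \<Sum>k=1..n. \<phi> k x)"
    by (rule Bochner_Integration.integral_sum[symmetric]) (rule I\<phi>)
  also have "\<dots> \<le> integral\<^sup>L lborel (\<lambda>x. indicator {-pi..pi} x *\<^sub>R (M * norm (f x) powr p))"
  proof (rule integral_mono)
    show "integrable lborel (\<lambda>x. \<Sum>k=1..n. \<phi> k x)" using I\<phi> by auto
    show "integrable lborel (\<lambda>x. indicator {-pi..pi} x *\<^sub>R (M * norm (f x) powr p))" by (rule IM)
    fix x :: real
    have "(\<Sum>k=1..n. \<phi> k x) = indicator {-pi..pi} x *\<^sub>R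
            (\<Sum>k=1..n. real k powr (s - 1) * (kern (real k) x * (norm (f x) powr p * \<bar>x\<bar> powr s)))"
      by (simp only: \<phi>_def scaleR_sum_right)
    also have "\<dots> \<le> indicator {-pi..pi} x *\<^sub>R (M * norm (f x) powr p)"
      using pw_sum_bound[OF s(1,2), where a = "norm (f x) powr p" and n = n and x = x]
      by (intro scaleR_left_mono) (auto simp: M_def)
    finally show "(\<Sum>k=1..n. \<phi> k x) \<le> indicator {-pi..pi} x *\<^sub>R (M * norm (f x) powr p)" .
  qed
  also have "\<dots> = M * (LINT x:{-pi..pi}|lborel. norm (f x) powr p)"
  proof -
    have "(\<lambda>x. indicator {-pi..pi} x *\<^sub>R (M * norm (f x) powr p)) = (\<lambda>x. M * (indicator {-pi..pi} x *\<^sub>R norm (f x) powr p))"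
      by (auto simp: fun_eq_iff)
    then show ?thesis by (simp add: set_lebesgue_integral_def)
  qed
  finally have "(\<Sum>k=1..n. net_term (p / (p - 1)) p (fourier_coeff f) k)
      \<le> C0 * (M * (LINT x:{-pi..pi}|lborel. norm (f x) powr p))"
    using C0 by (simp add: mult_left_mono)
  then show ?thesis by (simp add: C0_def M_def mult_ac)
qed

lemma main_meas:
  fixes f :: "real \<Rightarrow> complex" and p s :: real
  assumes p: "1 < p" and fm: "f \<in> borel_measurable lborel"
    and fp: "set_integrable lborel {-pi..pi} (\<lambda>x. norm (f x) powr p)"
    and s: "0 < s" "s < 1" "s / (p - 1) < 1"
  shows "summable (\<lambda>k. net_term (p / (p - 1)) p (fourier_coeff f) (Suc k)) \<and>
         net_norm (p / (p - 1)) p (fourier_coeff f)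
           \<le> ((2 powr p * (2 * (1/(1 - s/(p-1)) + 1/(s/(p-1)))) powr (p - 1)) * (1/s + 1 + 3/(1-s))) powr (1/p)
              * Lp_norm_pi p f"
proof -
  define K where "K = (2 powr p * (2 * (1/(1 - s/(p-1)) + 1/(s/(p-1)))) powr (p - 1)) * (1/s + 1 + 3/(1-s))"
  define I where "I = (LINT x:{-pi..pi}|lborel. norm (f x) powr p)"
  define a where "a = (\<lambda>k. net_term (p / (p - 1)) p (fourier_coeff f) (Suc k))"
  have K0: "0 \<le> K" using s by (simp add: K_def)
  have I0: "0 \<le> I" unfolding I_def set_lebesgue_integral_def by (intro integral_nonneg_AE AE_I2) auto
  have a0: "0 \<le> a k" for k by (simp add: a_def net_term_def)
  have ps: "(\<Sum>k<n. a k) \<le> K * I" for n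
  proof -
    have "(\<Sum>k<n. a k) = (\<Sum>k=1..n. net_term (p / (p - 1)) p (fourier_coeff f) k)"
      unfolding a_def by (rule sum_bounds_lt_plus1)
    also have "\<dots> \<le> K * I" unfolding K_def I_def by (rule partial_sum_bound[OF p fm fp s])
    finally show ?thesis .
  qed
  have sa: "summable a"
  proof (rule bounded_imp_summable[OF a0])
    fix n show "(\<Sum>k\<le>n. a k) \<le> K * I" using ps[of "Suc n"] by (simp add: lessThan_Suc_atMost)
  qed
  have "suminf a \<le> K * I" by (rule suminf_le_const[OF sa ps])
  moreover have "0 \<le> suminf a" by (rule suminf_nonneg[OF sa a0])
  ultimately have "suminf a powr (1/p) \<le> (K * I) powr (1/p)" using p by (intro powr_mono2) auto
  also have "\<dots> = K powr (1/p) * I powr (1/p)" using K0 I0 by (simp add: powr_mult)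
  finally show ?thesis using sa
    by (simp add: net_norm_def Lp_norm_pi_def a_def K_def I_def)
qed

theorem mainTheorem6:
  fixes p :: real
  assumes "1 < p"
  shows "\<exists>C>0. \<forall>f :: real \<Rightarrow> complex.
           set_borel_measurable lborel {-pi..pi} f \<and>
           set_integrable lborel {-pi..pi} (\<lambda>x. norm (f x) powr p) \<longrightarrow>
             summable (\<lambda>k. net_term (p / (p - 1)) p (fourier_coeff f) (Suc k)) \<and>
             net_norm (p / (p - 1)) p (fourier_coeff f) \<le> C * Lp_norm_pi p f"
proof -
  note p = assms
  define s where "s = min 1 (p - 1) / 2"
  have s: "0 < s" "s < 1" "s / (p - 1) < 1" using p by (auto simp: s_def min_def field_simps)
  define C where "C = ((2 powr p * (2 * (1/(1 - s/(p-1)) + 1/(s/(p-1)))) powr (p - 1)) * (1/s + 1 + 3/(1-s))) powr (1/p)"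
  have gpos: "0 < s / (p - 1)" using s p by simp
  have Bpos: "0 < 2 * (1/(1 - s/(p-1)) + 1/(s/(p-1)))" using s gpos p by (intro mult_pos_pos add_pos_pos) auto
  define K where "K = (2 powr p * (2 * (1/(1 - s/(p-1)) + 1/(s/(p-1)))) powr (p - 1)) * (1/s + 1 + 3/(1-s))"
  have "0 < K" unfolding K_def
    using s Bpos by (intro mult_pos_pos add_pos_pos) auto
  then have "K \<noteq> 0" by simp
  then have C0: "C > 0" unfolding C_def K_def[symmetric] by simp
  show ?thesis
  proof (intro exI[of _ C] conjI allI impI C0)
    fix f :: "real \<Rightarrow> complex"
    assume H: "set_borel_measurable lborel {-pi..pi} f \<and> set_integrable lborel {-pi..pi} (\<lambda>x. norm (f x) powr p)"
    define g where "g = (\<lambda>x. indicator {-pi..pi} x *\<^sub>R f x)"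
    have gm: "g \<in> borel_measurable lborel" using H by (simp add: g_def set_borel_measurable_def)
    have eqS: "\<And>x. x \<in> {-pi..pi} \<Longrightarrow> g x = f x" by (simp add: g_def)
    have gp: "set_integrable lborel {-pi..pi} (\<lambda>x. norm (g x) powr p)"
      using H by (subst set_integrable_cong[OF refl refl, where f' = "\<lambda>x. norm (f x) powr p"]) (auto simp: eqS)
    have fc: "fourier_coeff g = fourier_coeff f"
      unfolding fourier_coeff_def fun_eq_iff
      by (intro allI arg_cong[where f = "\<lambda>t. _ * t"] set_lebesgue_integral_cong) (auto simp: eqS)
    have lp: "Lp_norm_pi p g = Lp_norm_pi p f"
      unfolding Lp_norm_pi_def
      by (intro arg_cong[where f = "\<lambda>t. t powr _"] set_lebesgue_integral_cong) (auto simp: eqS)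
    show "summable (\<lambda>k. net_term (p / (p - 1)) p (fourier_coeff f) (Suc k))"
      using main_meas[OF p gm gp s] by (simp add: fc)
    show "net_norm (p / (p - 1)) p (fourier_coeff f) \<le> C * Lp_norm_pi p f"
      using main_meas[OF p gm gp s] by (simp add: fc lp C_def)
  qed
qed


end
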